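(* Let $K\ge 2$, let $\mathcal{D}$ be a probability distribution on $\mathcal{X}\times\mathcal{Y}$ with $\mathcal{Y}=\{1,\dots,K\}$, and let $\rho$ be a probability distribution over classifiers $h:\mathcal{X}\to\mathcal{Y}$. Let $W_\rho(X,Y)=\mathbb{E}_{h\sim\rho}[\mathbb{1}(h(X)\neq Y)]$ for $(X,Y)\sim\mathcal{D}$. Suppose $\rho$ is competent, i.e. for every $0\le t\le 1/2$, $$\mathbb{P}_{\mathcal{D}}\big(W_\rho\in[t,1/2)\big)\;\ge\;\mathbb{P}_{\mathcal{D}}\big(W_\rho\in[1/2,1-t]\big),$$ and suppose $\mathbb{E}_{h\sim\rho}[L(h)]\neq 0$. Then $$\mathrm{DER}\;\ge\;\mathrm{EIR}\;\ge\;\frac{2(K-1)}{K}\,\mathrm{DER}-\frac{3K-4}{K}.$$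
   Context: The error rate of a classifier is $L(h)=\mathbb{E}_{(X,Y)\sim\mathcal{D}}[\mathbb{1}(h(X)\neq Y)]$. The majority vote classifier is $h_{\mathrm{MV}}(x)=\arg\max_j \mathbb{E}_{h\sim\rho}[\mathbb{1}(h(x)=j)]$ (ties broken arbitrarily). The disagreement rate of two classifiers is $D(h,h')=\mathbb{E}_{X\sim\mathcal{D}}[\mathbb{1}(h(X)\neq h'(X))]$, and the expected disagreement is $\mathbb{E}_{h,h'\sim\rho}[D(h,h')]$ with $h,h'$ drawn independently from $\rho$. The ensemble improvement rate is $\mathrm{EIR}=\big(\mathbb{E}_{h\sim\rho}[L(h)]-L(h_{\mathrm{MV}})\big)/\mathbb{E}_{h\sim\rho}[L(h)]$ and the disagreement-error ratio is $\mathrm{DER}=\mathbb{E}_{h,h'\sim\rho}[D(h,h')]/\mathbb{E}_{h\sim\rho}[L(h)]$. *)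

theory Defs
  imports "HOL-Probability.Probability"
begin

text \<open>D : distribution on X \<times> Y (labels are naturals in {1..K}).
  rho : distribution over an index space 'h; clf c is the classifier indexed by c.\<close>

definition err :: "('x \<times> nat) measure \<Rightarrow> ('x \<Rightarrow> nat) \<Rightarrow> real" where
  "err D h = measure D {z \<in> space D. h (fst z) \<noteq> snd z}"

definition dis :: "('x \<times> nat) measure \<Rightarrow> ('x \<Rightarrow> nat) \<Rightarrow> ('x \<Rightarrow> nat) \<Rightarrow> real" where
  "dis D h h' = measure D {z \<in> space D. h (fst z) \<noteq> h' (fst z)}"

definition W_rho :: "'h measure \<Rightarrow> ('h \<Rightarrow> 'x \<Rightarrow> nat) \<Rightarrow> ('x \<times> nat) \<Rightarrow> real" where
  "W_rho rho clf z = measure rho {c \<in> space rho. clf c (fst z) \<noteq> snd z}"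

definition exp_err :: "('x \<times> nat) measure \<Rightarrow> 'h measure \<Rightarrow> ('h \<Rightarrow> 'x \<Rightarrow> nat) \<Rightarrow> real" where
  "exp_err D rho clf = (\<integral>c. err D (clf c) \<partial>rho)"

definition exp_dis :: "('x \<times> nat) measure \<Rightarrow> 'h measure \<Rightarrow> ('h \<Rightarrow> 'x \<Rightarrow> nat) \<Rightarrow> real" where
  "exp_dis D rho clf = (\<integral>c. (\<integral>c'. dis D (clf c) (clf c') \<partial>rho) \<partial>rho)"

definition is_majority_vote :: "nat \<Rightarrow> 'h measure \<Rightarrow> ('h \<Rightarrow> 'x \<Rightarrow> nat) \<Rightarrow> ('x \<Rightarrow> nat) \<Rightarrow> bool" where
  "is_majority_vote K rho clf hMV \<longleftrightarrow>
     (\<forall>x. hMV x \<in> {1..K} \<and>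
        (\<forall>j\<in>{1..K}. measure rho {c \<in> space rho. clf c x = j}
                     \<le> measure rho {c \<in> space rho. clf c x = hMV x}))"

definition EIR :: "('x \<times> nat) measure \<Rightarrow> 'h measure \<Rightarrow> ('h \<Rightarrow> 'x \<Rightarrow> nat) \<Rightarrow> ('x \<Rightarrow> nat) \<Rightarrow> real" where
  "EIR D rho clf hMV = (exp_err D rho clf - err D hMV) / exp_err D rho clf"

definition DER :: "('x \<times> nat) measure \<Rightarrow> 'h measure \<Rightarrow> ('h \<Rightarrow> 'x \<Rightarrow> nat) \<Rightarrow> real" where
  "DER D rho clf = exp_dis D rho clf / exp_err D rho clf"

definition competent :: "('x \<times> nat) measure \<Rightarrow> 'h measure \<Rightarrow> ('h \<Rightarrow> 'x \<Rightarrow> nat) \<Rightarrow> bool" where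
  "competent D rho clf \<longleftrightarrow>
     (\<forall>t::real. 0 \<le> t \<and> t \<le> 1/2 \<longrightarrow>
        measure D {z \<in> space D. W_rho rho clf z \<in> {t..<1/2}}
        \<ge> measure D {z \<in> space D. W_rho rho clf z \<in> {1/2..1-t}})"

end

theory Submission
  imports Defs
begin


lemma competence_sq:
  fixes D :: "'a measure" and W :: "'a \<Rightarrow> real"
  assumes D: "prob_space D" and Wm[measurable]: "W \<in> borel_measurable D"
    and W01: "\<And>z. z \<in> space D \<Longrightarrow> 0 \<le> W z \<and> W z \<le> 1"
    and comp: "\<And>t. 0 \<le> t \<Longrightarrow> t \<le> 1/2 \<Longrightarrow>
       measure D {z\<in>space D. W z \<in> {1/2..1-t}} \<le> measure D {z\<in>space D. W z \<in> {t..<1/2}}"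
  shows "(\<integral>z. (if 1/2 \<le> W z then (1 - W z)^2 else 0) \<partial>D) \<le> (\<integral>z. (if W z < 1/2 then (W z)^2 else 0) \<partial>D)"
proof -
  interpret D: prob_space D by (fact D)
  interpret P: pair_sigma_finite D lborel
    by (intro pair_sigma_finite.intro D.sigma_finite_measure_axioms lborel.sigma_finite_measure_axioms)
  define F where "F = (\<lambda>z t. ennreal (2*t) * indicator {0..1/2} t * (if t \<le> W z \<and> W z < 1/2 then 1 else 0))"
  define G where "G = (\<lambda>z t. ennreal (2*t) * indicator {0..1/2} t * (if 1/2 \<le> W z \<and> W z \<le> 1 - t then 1 else 0))"
  have Fm: "case_prod F \<in> borel_measurable (D \<Otimes>\<^sub>M lborel)" unfolding F_def by measurable
  have Gm: "case_prod G \<in> borel_measurable (D \<Otimes>\<^sub>M lborel)" unfolding G_def by measurable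
  have Fz: "(\<integral>\<^sup>+t. F z t \<partial>lborel) = ennreal (if W z < 1/2 then (W z)^2 else 0)" if z: "z \<in> space D" for z
  proof (cases "W z < 1/2")
    case True
    have "(\<integral>\<^sup>+t. F z t \<partial>lborel) = (\<integral>\<^sup>+t. ennreal (2*t) * indicator {0..W z} t \<partial>lborel)"
      using True by (intro nn_integral_cong) (auto simp: F_def indicator_def)
    also have "\<dots> = ennreal ((W z)^2 - 0^2)"
      using W01[OF z]
      by (intro nn_integral_FTC_Icc) (auto intro!: derivative_eq_intros)
    finally show ?thesis using True by simp
  next
    case False
    then show ?thesis by (simp add: F_def)
  qed
  have Gz: "(\<integral>\<^sup>+t. G z t \<partial>lborel) = ennreal (if 1/2 \<le> W z then (1 - W z)^2 else 0)" if z: "z \<in> space D" for z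
  proof (cases "1/2 \<le> W z")
    case True
    have "(\<integral>\<^sup>+t. G z t \<partial>lborel) = (\<integral>\<^sup>+t. ennreal (2*t) * indicator {0..1 - W z} t \<partial>lborel)"
      using True by (intro nn_integral_cong) (auto simp: G_def indicator_def)
    also have "\<dots> = ennreal ((1 - W z)^2 - 0^2)"
      using W01[OF z]
      by (intro nn_integral_FTC_Icc) (auto intro!: derivative_eq_intros)
    finally show ?thesis using True by simp
  next
    case False
    then show ?thesis by (simp add: G_def)
  qed
  have Ft: "(\<integral>\<^sup>+z. F z t \<partial>D) = ennreal (2*t) * indicator {0..1/2} t * emeasure D {z\<in>space D. W z \<in> {t..<1/2}}" for t
  proof -
    have "(\<integral>\<^sup>+z. F z t \<partial>D) = (\<integral>\<^sup>+z. ennreal (2*t) * indicator {0..1/2} t * indicator {z\<in>space D. W z \<in> {t..<1/2}} z \<partial>D)"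
      by (intro nn_integral_cong) (auto simp: F_def indicator_def)
    also have "\<dots> = ennreal (2*t) * indicator {0..1/2} t * emeasure D {z\<in>space D. W z \<in> {t..<1/2}}"
      by (subst nn_integral_cmult) auto
    finally show ?thesis .
  qed
  have Gt: "(\<integral>\<^sup>+z. G z t \<partial>D) = ennreal (2*t) * indicator {0..1/2} t * emeasure D {z\<in>space D. W z \<in> {1/2..1-t}}" for t
  proof -
    have "(\<integral>\<^sup>+z. G z t \<partial>D) = (\<integral>\<^sup>+z. ennreal (2*t) * indicator {0..1/2} t * indicator {z\<in>space D. W z \<in> {1/2..1-t}} z \<partial>D)"
      by (intro nn_integral_cong) (auto simp: G_def indicator_def)
    also have "\<dots> = ennreal (2*t) * indicator {0..1/2} t * emeasure D {z\<in>space D. W z \<in> {1/2..1-t}}"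
      by (subst nn_integral_cmult) auto
    finally show ?thesis .
  qed
  have "(\<integral>\<^sup>+z. ennreal (if 1/2 \<le> W z then (1 - W z)^2 else 0) \<partial>D) = (\<integral>\<^sup>+z. (\<integral>\<^sup>+t. G z t \<partial>lborel) \<partial>D)"
    using Gz by (intro nn_integral_cong) auto
  also have "\<dots> = (\<integral>\<^sup>+t. (\<integral>\<^sup>+z. G z t \<partial>D) \<partial>lborel)"
    using P.Fubini'[OF Gm] by simp
  also have "\<dots> \<le> (\<integral>\<^sup>+t. (\<integral>\<^sup>+z. F z t \<partial>D) \<partial>lborel)"
    unfolding Ft Gt
  proof (intro nn_integral_mono)
    fix t :: real
    show "ennreal (2*t) * indicator {0..1/2} t * emeasure D {z\<in>space D. W z \<in> {1/2..1-t}}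
       \<le> ennreal (2*t) * indicator {0..1/2} t * emeasure D {z\<in>space D. W z \<in> {t..<1/2}}"
    proof (cases "t \<in> {0..1/2}")
      case True
      then have "measure D {z\<in>space D. W z \<in> {1/2..1-t}} \<le> measure D {z\<in>space D. W z \<in> {t..<1/2}}"
        using comp by auto
      then have "emeasure D {z\<in>space D. W z \<in> {1/2..1-t}} \<le> emeasure D {z\<in>space D. W z \<in> {t..<1/2}}"
        by (simp add: D.emeasure_eq_measure)
      then show ?thesis by (intro mult_left_mono) auto
    qed simp
  qed
  also have "\<dots> = (\<integral>\<^sup>+z. (\<integral>\<^sup>+t. F z t \<partial>lborel) \<partial>D)"
    using P.Fubini'[OF Fm] by simp
  also have "\<dots> = (\<integral>\<^sup>+z. ennreal (if W z < 1/2 then (W z)^2 else 0) \<partial>D)"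
    using Fz by (intro nn_integral_cong) auto
  finally have le: "(\<integral>\<^sup>+z. ennreal (if 1/2 \<le> W z then (1 - W z)^2 else 0) \<partial>D)
     \<le> (\<integral>\<^sup>+z. ennreal (if W z < 1/2 then (W z)^2 else 0) \<partial>D)" .
  have i1: "integrable D (\<lambda>z. if 1/2 \<le> W z then (1 - W z)^2 else 0)"
    by (intro D.integrable_const_bound[where B=1]) (auto intro!: AE_I2 simp: W01 abs_le_square_iff power_le_one)
  have i2: "integrable D (\<lambda>z. if W z < 1/2 then (W z)^2 else 0)"
    by (intro D.integrable_const_bound[where B=1]) (auto intro!: AE_I2 simp: W01 power_le_one)
  have n1: "0 \<le> (\<integral>z. (if W z < 1/2 then (W z)^2 else 0) \<partial>D)"
    by (intro integral_nonneg_AE) auto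
  have e1: "(\<integral>\<^sup>+z. ennreal (if 1/2 \<le> W z then (1 - W z)^2 else 0) \<partial>D) = ennreal (\<integral>z. (if 1/2 \<le> W z then (1 - W z)^2 else 0) \<partial>D)"
    by (rule nn_integral_eq_integral[OF i1]) auto
  have e2: "(\<integral>\<^sup>+z. ennreal (if W z < 1/2 then (W z)^2 else 0) \<partial>D) = ennreal (\<integral>z. (if W z < 1/2 then (W z)^2 else 0) \<partial>D)"
    by (rule nn_integral_eq_integral[OF i2]) auto
  show ?thesis
    using le n1 ennreal_le_iff unfolding e1 e2 by blast
qed



lemma pointwise:
  fixes q :: "nat \<Rightarrow> real" and K y m :: nat
  assumes K: "K \<ge> 2" and y: "y \<in> {1..K}" and m: "m \<in> {1..K}"
    and q0: "\<forall>j\<in>{1..K}. 0 \<le> q j" and qs: "(\<Sum>j\<in>{1..K}. q j) = 1"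
    and qm: "\<forall>j\<in>{1..K}. q j \<le> q m"
  shows "1 - q y \<le> (1 - (\<Sum>j\<in>{1..K}. (q j)^2)) + (if m \<noteq> y then 1 else 0)"
    and "real K * (1 - q y)^2 \<le> (real K - 1) * (2 * (1 - q y) - (1 - (\<Sum>j\<in>{1..K}. (q j)^2)))"
    and "(if m \<noteq> y then 1 else 0) \<le> 2 * ((1 - q y)^2 - (if 1 - q y < 1/2 then (1 - q y)^2 else 0)
           + (if 1/2 \<le> 1 - q y then (1 - (1 - q y))^2 else 0))"
    and "0 \<le> 1 - q y" and "1 - q y \<le> 1"
proof -
  have fin: "finite {1..K}" by simp
  have qle1: "q j \<le> 1" if "j \<in> {1..K}" for j
    using member_le_sum[of j "{1..K}" q] q0 qs that by auto
  have sq_le: "(\<Sum>j\<in>{1..K}. (q j)^2) \<le> (\<Sum>j\<in>{1..K}. q j * q m)"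
    by (intro sum_mono) (use q0 qm in \<open>auto simp: power2_eq_square intro: mult_left_mono\<close>)
  also have "\<dots> = q m" using qs by (simp add: sum_distrib_right[symmetric])
  finally have sq_m: "(\<Sum>j\<in>{1..K}. (q j)^2) \<le> q m" .
  show "0 \<le> 1 - q y" "1 - q y \<le> 1" using qle1[OF y] q0 y by auto
  show "1 - q y \<le> (1 - (\<Sum>j\<in>{1..K}. (q j)^2)) + (if m \<noteq> y then 1 else 0)"
  proof (cases "m = y")
    case True then show ?thesis using sq_m by simp
  next
    case False
    have "(\<Sum>j\<in>{1..K}. (q j)^2) \<le> 1" using sq_m qle1[OF m] by simp
    moreover have "0 \<le> q y" using q0 y by auto
    ultimately show ?thesis using False by auto
  qed
  have split: "(\<Sum>j\<in>{1..K}. g j) = g y + (\<Sum>j\<in>{1..K}-{y}. g j)" for g :: "nat \<Rightarrow> real"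
    using y by (simp add: sum.remove)
  have cK: "card ({1..K}-{y}) = K - 1" using y by simp
  have "(\<Sum>j\<in>{1..K}-{y}. q j)^2 \<le> (\<Sum>j\<in>{1..K}-{y}. (q j)^2) * real (K - 1)"
    using sum_squared_le_sum_of_squares[of q "{1..K}-{y}"] cK by simp
  moreover have "(\<Sum>j\<in>{1..K}-{y}. q j) = 1 - q y" using split[of q] qs by simp
  ultimately have cs: "(1 - q y)^2 \<le> (\<Sum>j\<in>{1..K}-{y}. (q j)^2) * (real K - 1)"
    using K by (simp add: of_nat_diff)
  have sq: "(\<Sum>j\<in>{1..K}. (q j)^2) = (q y)^2 + (\<Sum>j\<in>{1..K}-{y}. (q j)^2)" using split by simp
  show "real K * (1 - q y)^2 \<le> (real K - 1) * (2 * (1 - q y) - (1 - (\<Sum>j\<in>{1..K}. (q j)^2)))"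
    unfolding sq using cs by (simp add: algebra_simps power2_eq_square)
  show "(if m \<noteq> y then 1 else 0) \<le> 2 * ((1 - q y)^2 - (if 1 - q y < 1/2 then (1 - q y)^2 else 0)
           + (if 1/2 \<le> 1 - q y then (1 - (1 - q y))^2 else 0))"
  proof (cases "m = y")
    case True
    then show ?thesis by (auto simp: power2_eq_square)
  next
    case False
    have "(\<Sum>j\<in>{y, m}. q j) \<le> (\<Sum>j\<in>{1..K}. q j)"
      using y m q0 by (intro sum_mono2) auto
    then have "q y + q m \<le> 1" using False qs by simp
    then have h: "q y \<le> 1/2" using qm y by force
    have "0 \<le> (1 - 2 * q y)^2" by simp
    then have k: "1/2 \<le> (1 - q y)^2 + (q y)^2"
      by (simp add: power2_eq_square algebra_simps)
    show ?thesis using False h k by auto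
  qed
qed


lemma measure_as_integral:
  assumes "prob_space M" "{x\<in>space M. P x} \<in> sets M"
  shows "measure M {x\<in>space M. P x} = (\<integral>x. (if P x then 1 else 0) \<partial>M)"
proof -
  interpret prob_space M by fact
  have "measure M {x\<in>space M. P x} = (\<integral>x. indicator {x\<in>space M. P x} x \<partial>M)"
    using assms(2) by (simp add: integral_indicator emeasure_eq_measure)
  also have "\<dots> = (\<integral>x. (if P x then 1 else 0) \<partial>M)"
    by (rule Bochner_Integration.integral_cong) (auto simp: indicator_def)
  finally show ?thesis .
qed

lemma cnt_set:
  assumes "g \<in> measurable M (count_space UNIV)"
  shows "{x\<in>space M. P (g x)} \<in> sets M"
proof -
  have "{x\<in>space M. P (g x)} = g -` {a. P a} \<inter> space M" by auto
  then show ?thesis using measurable_sets[OF assms, of "{a. P a}"] by simp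
qed

lemma cnt_set2:
  fixes g1 g2 :: "'a \<Rightarrow> nat"
  assumes "g1 \<in> measurable M (count_space UNIV)" "g2 \<in> measurable M (count_space UNIV)"
  shows "{x\<in>space M. P (g1 x) (g2 x)} \<in> sets M"
proof -
  have "(\<lambda>x. (g1 x, g2 x)) \<in> measurable M (count_space UNIV \<Otimes>\<^sub>M count_space UNIV)"
    using assms by (intro measurable_Pair)
  then have g: "(\<lambda>x. (g1 x, g2 x)) \<in> measurable M (count_space UNIV)"
    by (simp add: pair_measure_countable)
  show ?thesis using cnt_set[OF g, of "\<lambda>(a, b). P a b"] by simp
qed

lemma final_alg:
  fixes e d m s A B :: real and K :: nat
  assumes K: "K \<ge> 2" and e: "0 < e"
    and I1: "e \<le> d + m" and I2: "real K * s \<le> (real K - 1) * (2 * e - d)"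
    and I3: "m \<le> 2 * (s - B + A)" and I4: "A \<le> B"
  shows "d / e \<ge> (e - m) / e \<and> (e - m) / e \<ge> 2 * (real K - 1) / real K * (d / e) - (3 * real K - 4) / real K"
proof
  show "d / e \<ge> (e - m) / e" using I1 e by (intro divide_right_mono) auto
  have Kp: "0 < real K" using K by simp
  have "real K * m \<le> 2 * (real K * s)" using I3 I4 Kp by (simp add: mult_left_mono)
  also have "\<dots> \<le> 2 * ((real K - 1) * (2 * e - d))" using I2 by simp
  finally have km: "real K * m \<le> 2 * ((real K - 1) * (2 * e - d))" .
  have eq: "(e - m) / e - (2 * (real K - 1) / real K * (d / e) - (3 * real K - 4) / real K)
      = (2 * ((real K - 1) * (2 * e - d)) - real K * m) / (real K * e)"
    using Kp e by (simp add: field_simps)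
  have "0 \<le> (2 * ((real K - 1) * (2 * e - d)) - real K * m) / (real K * e)"
    using km Kp e by (intro divide_nonneg_pos) auto
  then show "(e - m) / e \<ge> 2 * (real K - 1) / real K * (d / e) - (3 * real K - 4) / real K"
    using eq by linarith
qed

theorem theorem2:
  fixes K :: nat
    and D :: "('x \<times> nat) measure"
    and rho :: "'h measure"
    and clf :: "'h \<Rightarrow> 'x \<Rightarrow> nat"
    and hMV :: "'x \<Rightarrow> nat"
  assumes K: "K \<ge> 2"
    and D: "prob_space D"
    and rho: "prob_space rho"
    and labels: "\<forall>z \<in> space D. snd z \<in> {1..K}"
    and clf_range: "\<forall>c x. clf c x \<in> {1..K}"
    and meas_snd: "snd \<in> measurable D (count_space UNIV)"
    and meas_clf: "(\<lambda>(c, z). clf c (fst z)) \<in> measurable (rho \<Otimes>\<^sub>M D) (count_space UNIV)"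
    and meas_MV: "(\<lambda>z. hMV (fst z)) \<in> measurable D (count_space UNIV)"
    and MV: "is_majority_vote K rho clf hMV"
    and comp: "competent D rho clf"
    and nz: "exp_err D rho clf \<noteq> 0"
  shows "DER D rho clf \<ge> EIR D rho clf hMV \<and>
         EIR D rho clf hMV \<ge> 2 * (real K - 1) / real K * DER D rho clf - (3 * real K - 4) / real K"
proof -
  interpret D: prob_space D by (fact D)
  interpret R: prob_space rho by (fact rho)
  interpret P: pair_prob_space rho D
    by (intro pair_prob_space.intro pair_sigma_finite.intro D.sigma_finite_measure_axioms R.sigma_finite_measure_axioms rho D)
  have hc[measurable]: "(\<lambda>p. clf (fst p) (fst (snd p))) \<in> measurable (rho \<Otimes>\<^sub>M D) (count_space UNIV)"
    using meas_clf by (simp add: split_beta')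
  have hs[measurable]: "(\<lambda>p. snd (snd p)) \<in> measurable (rho \<Otimes>\<^sub>M D) (count_space UNIV)"
    using measurable_compose[OF measurable_snd[of rho D] meas_snd] by simp
  have hc'[measurable]: "(\<lambda>p. clf (snd p) (fst (fst p))) \<in> measurable (D \<Otimes>\<^sub>M rho) (count_space UNIV)"
    using measurable_compose[OF measurable_pair_swap' meas_clf] by (simp add: split_beta')
  have hs'[measurable]: "(\<lambda>p. snd (fst p)) \<in> measurable (D \<Otimes>\<^sub>M rho) (count_space UNIV)"
    using measurable_compose[OF measurable_fst[of D rho] meas_snd] by simp
  have hcz[measurable]: "(\<lambda>c. clf c (fst z)) \<in> measurable rho (count_space UNIV)" if "z \<in> space D" for z
    using measurable_compose[OF measurable_Pair2'[OF that] hc] by simp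
  have hcc[measurable]: "(\<lambda>z. clf c (fst z)) \<in> measurable D (count_space UNIV)" if "c \<in> space rho" for c
    using measurable_compose[OF measurable_Pair1'[OF that] hc] by simp
  have [measurable]: "snd \<in> measurable D (count_space UNIV)" by (fact meas_snd)
  have [measurable]: "(\<lambda>z. hMV (fst z)) \<in> measurable D (count_space UNIV)" by (fact meas_MV)

  define f where "f = (\<lambda>(j::nat) c (z::'x \<times> nat). if clf c (fst z) = j then 1 else (0::real))"
  define ne where "ne = (\<lambda>c (z::'x \<times> nat). if clf c (fst z) \<noteq> snd z then 1 else (0::real))"
  define p where "p = (\<lambda>j z. \<integral>c. f j c z \<partial>rho)"
  define W where "W = (\<lambda>z. \<integral>c. ne c z \<partial>rho)"
  define M where "M = (\<lambda>(z::'x \<times> nat). if hMV (fst z) \<noteq> snd z then 1 else (0::real))"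
  define dd where "dd = (\<lambda>z. 1 - (\<Sum>j\<in>{1..K}. (p j z)^2))"

  have fm[measurable]: "(\<lambda>(c, z). f j c z) \<in> borel_measurable (rho \<Otimes>\<^sub>M D)" for j
    unfolding f_def by measurable
  have nem[measurable]: "(\<lambda>(c, z). ne c z) \<in> borel_measurable (rho \<Otimes>\<^sub>M D)"
  proof -
    have g: "(\<lambda>p. (clf (fst p) (fst (snd p)), snd (snd p))) \<in> measurable (rho \<Otimes>\<^sub>M D) (count_space UNIV)"
    proof -
      have "(\<lambda>p. (clf (fst p) (fst (snd p)), snd (snd p))) \<in> measurable (rho \<Otimes>\<^sub>M D) (count_space UNIV \<Otimes>\<^sub>M count_space UNIV)"
        by (intro measurable_Pair hc hs)
      then show ?thesis by (simp add: pair_measure_countable)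
    qed
    have "(\<lambda>p. (\<lambda>(a::nat, b::nat). if a \<noteq> b then 1 else (0::real)) (clf (fst p) (fst (snd p)), snd (snd p))) \<in> borel_measurable (rho \<Otimes>\<^sub>M D)"
      by (rule measurable_compose[OF g]) simp
    then show ?thesis by (simp add: ne_def split_beta')
  qed
  have pm[measurable]: "p j \<in> borel_measurable D" for j
  proof -
    have "(\<lambda>(z, c). f j c z) \<in> borel_measurable (D \<Otimes>\<^sub>M rho)" unfolding f_def by measurable
    then show ?thesis unfolding p_def by (rule R.borel_measurable_lebesgue_integral)
  qed
  have Wm[measurable]: "W \<in> borel_measurable D"
  proof -
    have g: "(\<lambda>p. (clf (snd p) (fst (fst p)), snd (fst p))) \<in> measurable (D \<Otimes>\<^sub>M rho) (count_space UNIV)"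
    proof -
      have "(\<lambda>p. (clf (snd p) (fst (fst p)), snd (fst p))) \<in> measurable (D \<Otimes>\<^sub>M rho) (count_space UNIV \<Otimes>\<^sub>M count_space UNIV)"
        by (intro measurable_Pair hc' hs')
      then show ?thesis by (simp add: pair_measure_countable)
    qed
    have "(\<lambda>p. (\<lambda>(a::nat, b::nat). if a \<noteq> b then 1 else (0::real)) (clf (snd p) (fst (fst p)), snd (fst p))) \<in> borel_measurable (D \<Otimes>\<^sub>M rho)"
      by (rule measurable_compose[OF g]) simp
    then have "(\<lambda>(z, c). ne c z) \<in> borel_measurable (D \<Otimes>\<^sub>M rho)" by (simp add: ne_def split_beta')
    then show ?thesis unfolding W_def by (rule R.borel_measurable_lebesgue_integral)
  qed
  have intf: "integrable rho (\<lambda>c. f j c z)" if z: "z \<in> space D" for j z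
  proof -
    note [measurable] = hcz[OF z]
    show ?thesis by (intro R.integrable_const_bound[where B=1]) (auto simp: f_def)
  qed
  have p_eq: "p j z = measure rho {c\<in>space rho. clf c (fst z) = j}" if z: "z \<in> space D" for j z
    unfolding p_def f_def by (rule measure_as_integral[OF rho cnt_set[OF hcz[OF z]], symmetric])
  have W_eq: "W z = W_rho rho clf z" if z: "z \<in> space D" for z
  proof -
    have "{c\<in>space rho. clf c (fst z) \<noteq> snd z} \<in> sets rho" by (rule cnt_set[OF hcz[OF z]])
    then show ?thesis
      unfolding W_def ne_def W_rho_def by (rule measure_as_integral[OF rho, symmetric])
  qed
  have W_p: "W z = 1 - p (snd z) z" if z: "z \<in> space D" for z
  proof -
    have "W z = (\<integral>c. 1 - f (snd z) c z \<partial>rho)"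
      unfolding W_def by (rule Bochner_Integration.integral_cong) (auto simp: ne_def f_def)
    also have "\<dots> = 1 - p (snd z) z"
    proof -
      have "(\<integral>c. 1 - f (snd z) c z \<partial>rho) = (\<integral>c. 1 \<partial>rho) - (\<integral>c. f (snd z) c z \<partial>rho)"
        by (rule Bochner_Integration.integral_diff) (auto intro: intf[OF z])
      then show ?thesis unfolding p_def by (simp add: R.prob_space)
    qed
    finally show ?thesis .
  qed
  have p_sum: "(\<Sum>j\<in>{1..K}. p j z) = 1" if z: "z \<in> space D" for z
  proof -
    have "(\<Sum>j\<in>{1..K}. p j z) = (\<integral>c. (\<Sum>j\<in>{1..K}. f j c z) \<partial>rho)"
      unfolding p_def by (rule Bochner_Integration.integral_sum[symmetric]) (rule intf[OF z])
    also have "\<dots> = (\<integral>c. 1 \<partial>rho)"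
    proof (rule Bochner_Integration.integral_cong)
      fix c
      have "(\<Sum>j\<in>{1..K}. f j c z) = (\<Sum>j\<in>{1..K}. if clf c (fst z) = j then 1 else 0)"
        unfolding f_def ..
      also have "\<dots> = 1" using clf_range by (simp add: sum.delta)
      finally show "(\<Sum>j\<in>{1..K}. f j c z) = 1" .
    qed simp
    finally show ?thesis by (simp add: R.prob_space)
  qed
  have p_nn: "0 \<le> p j z" for j z unfolding p_def f_def by (intro integral_nonneg_AE) auto
  have p_mv: "p j z \<le> p (hMV (fst z)) z" if z: "z \<in> space D" and j: "j \<in> {1..K}" for j z
    using MV j unfolding is_majority_vote_def p_eq[OF z] by blast
  have hMV_r: "hMV x \<in> {1..K}" for x using MV unfolding is_majority_vote_def by blast
  have p_le1: "p j z \<le> 1" if z: "z \<in> space D" and j: "j \<in> {1..K}" for j z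
    using member_le_sum[of j "{1..K}" "\<lambda>j. p j z"] p_sum[OF z] p_nn j by auto
  have hs_clf: "(\<Sum>j\<in>{1..K}. f j c z * g j) = g (clf c (fst z))" for c z and g :: "nat \<Rightarrow> real"
  proof -
    have "(\<Sum>j\<in>{1..K}. f j c z * g j) = (\<Sum>j\<in>{1..K}. if clf c (fst z) = j then g j else 0)"
      unfolding f_def by (intro sum.cong) auto
    also have "\<dots> = g (clf c (fst z))" using clf_range by (simp add: sum.delta)
    finally show ?thesis .
  qed
  have E1: "exp_err D rho clf = (\<integral>z. W z \<partial>D)"
  proof -
    have "exp_err D rho clf = (\<integral>c. (\<integral>z. ne c z \<partial>D) \<partial>rho)"
      unfolding exp_err_def
    proof (rule Bochner_Integration.integral_cong)
      fix c assume c: "c \<in> space rho"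
      show "err D (clf c) = (\<integral>z. ne c z \<partial>D)"
        unfolding err_def ne_def
        by (rule measure_as_integral[OF D cnt_set2[OF hcc[OF c] meas_snd]])
    qed simp
    also have "\<dots> = (\<integral>z. (\<integral>c. ne c z \<partial>rho) \<partial>D)"
      using nem by (intro P.Fubini_integral[symmetric] P.integrable_const_bound[where B=1])
         (auto simp: ne_def split_beta')
    finally show ?thesis unfolding W_def .
  qed
  have E2: "err D hMV = (\<integral>z. M z \<partial>D)"
    unfolding err_def M_def
    by (rule measure_as_integral[OF D cnt_set2[OF meas_MV meas_snd]])
  define H where "H = (\<lambda>c c' z. 1 - (\<Sum>j\<in>{1..K}. f j c z * f j c' z))"
  have dis_eq: "dis D (clf c) (clf c') = (\<integral>z. H c c' z \<partial>D)" if c: "c \<in> space rho" and c': "c' \<in> space rho" for c c'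
  proof -
    have "dis D (clf c) (clf c') = (\<integral>z. (if clf c (fst z) \<noteq> clf c' (fst z) then 1 else 0) \<partial>D)"
      unfolding dis_def by (rule measure_as_integral[OF D cnt_set2[OF hcc[OF c] hcc[OF c']]])
    also have "\<dots> = (\<integral>z. H c c' z \<partial>D)"
      unfolding H_def hs_clf by (rule Bochner_Integration.integral_cong) (auto simp: f_def)
    finally show ?thesis .
  qed
  have H_int: "(\<integral>c'. H c c' z \<partial>rho) = 1 - (\<Sum>j\<in>{1..K}. f j c z * p j z)" if z: "z \<in> space D" for c z
  proof -
    have i: "integrable rho (\<lambda>c'. f j c z * f j c' z)" for j using intf[OF z] by simp
    have "(\<integral>c'. H c c' z \<partial>rho) = (\<integral>c'. 1 \<partial>rho) - (\<integral>c'. (\<Sum>j\<in>{1..K}. f j c z * f j c' z) \<partial>rho)"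
      unfolding H_def using i by (intro Bochner_Integration.integral_diff) auto
    also have "(\<integral>c'. (\<Sum>j\<in>{1..K}. f j c z * f j c' z) \<partial>rho) = (\<Sum>j\<in>{1..K}. (\<integral>c'. f j c z * f j c' z \<partial>rho))"
      using i by (intro Bochner_Integration.integral_sum) auto
    also have "\<dots> = (\<Sum>j\<in>{1..K}. f j c z * p j z)"
      unfolding p_def by simp
    finally show ?thesis by (simp add: R.prob_space)
  qed
  have E3: "exp_dis D rho clf = (\<integral>z. dd z \<partial>D)"
  proof -
    have "exp_dis D rho clf = (\<integral>c. (\<integral>z. 1 - (\<Sum>j\<in>{1..K}. f j c z * p j z) \<partial>D) \<partial>rho)"
      unfolding exp_dis_def
    proof (rule Bochner_Integration.integral_cong)
      fix c assume c: "c \<in> space rho"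
      note [measurable] = hcc[OF c]
      have "(\<integral>c'. dis D (clf c) (clf c') \<partial>rho) = (\<integral>c'. (\<integral>z. H c c' z \<partial>D) \<partial>rho)"
        by (rule Bochner_Integration.integral_cong) (auto simp: dis_eq[OF c])
      also have "\<dots> = (\<integral>z. (\<integral>c'. H c c' z \<partial>rho) \<partial>D)"
      proof (rule P.Fubini_integral[symmetric], rule P.integrable_const_bound[where B=1])
        show "AE x in rho \<Otimes>\<^sub>M D. norm ((\<lambda>(c', z). H c c' z) x) \<le> 1"
          unfolding H_def hs_clf by (intro AE_I2) (auto simp: f_def)
        show "(\<lambda>(c', z). H c c' z) \<in> borel_measurable (rho \<Otimes>\<^sub>M D)"
          unfolding H_def f_def split_beta' by measurable
      qed
      also have "\<dots> = (\<integral>z. 1 - (\<Sum>j\<in>{1..K}. f j c z * p j z) \<partial>D)"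
        by (rule Bochner_Integration.integral_cong) (auto simp: H_int)
      finally show "(\<integral>c'. dis D (clf c) (clf c') \<partial>rho) = (\<integral>z. 1 - (\<Sum>j\<in>{1..K}. f j c z * p j z) \<partial>D)" .
    qed simp
    also have "\<dots> = (\<integral>z. (\<integral>c. 1 - (\<Sum>j\<in>{1..K}. f j c z * p j z) \<partial>rho) \<partial>D)"
    proof (rule P.Fubini_integral[symmetric], rule P.integrable_const_bound[where B=1])
      show "AE x in rho \<Otimes>\<^sub>M D. norm ((\<lambda>(c, z). 1 - (\<Sum>j\<in>{1..K}. f j c z * p j z)) x) \<le> 1"
      proof (intro AE_I2)
        fix x assume x: "x \<in> space (rho \<Otimes>\<^sub>M D)"
        then have z: "snd x \<in> space D" by (auto simp: space_pair_measure)
        show "norm ((\<lambda>(c, z). 1 - (\<Sum>j\<in>{1..K}. f j c z * p j z)) x) \<le> 1"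
          using p_le1[OF z clf_range[rule_format], of "fst x" "fst (snd x)"] p_nn[of "clf (fst x) (fst (snd x))" "snd x"]
          unfolding split_beta' hs_clf by auto
      qed
      show "(\<lambda>(c, z). 1 - (\<Sum>j\<in>{1..K}. f j c z * p j z)) \<in> borel_measurable (rho \<Otimes>\<^sub>M D)"
        unfolding f_def split_beta' by measurable
    qed
    also have "\<dots> = (\<integral>z. dd z \<partial>D)"
    proof (rule Bochner_Integration.integral_cong)
      fix z assume z: "z \<in> space D"
      have i: "integrable rho (\<lambda>c. f j c z * p j z)" for j using intf[OF z] by simp
      have "(\<integral>c. 1 - (\<Sum>j\<in>{1..K}. f j c z * p j z) \<partial>rho) = (\<integral>c. 1 \<partial>rho) - (\<integral>c. (\<Sum>j\<in>{1..K}. f j c z * p j z) \<partial>rho)"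
        using i by (intro Bochner_Integration.integral_diff) auto
      also have "(\<integral>c. (\<Sum>j\<in>{1..K}. f j c z * p j z) \<partial>rho) = (\<Sum>j\<in>{1..K}. (\<integral>c. f j c z * p j z \<partial>rho))"
        using i by (intro Bochner_Integration.integral_sum) auto
      also have "\<dots> = (\<Sum>j\<in>{1..K}. (p j z)^2)"
        unfolding p_def by (simp add: power2_eq_square)
      finally show "(\<integral>c. 1 - (\<Sum>j\<in>{1..K}. f j c z * p j z) \<partial>rho) = dd z"
        by (simp add: R.prob_space dd_def)
    qed simp
    finally show ?thesis .
  qed
  define a where "a = (\<lambda>z. if 1/2 \<le> W z then (1 - W z)^2 else 0)"
  define b where "b = (\<lambda>z. if W z < 1/2 then (W z)^2 else 0)"
  have pw: "W z \<le> dd z + M z \<and> real K * (W z)^2 \<le> (real K - 1) * (2 * W z - dd z) \<and>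
      M z \<le> 2 * ((W z)^2 - b z + a z) \<and> 0 \<le> W z \<and> W z \<le> 1" if z: "z \<in> space D" for z
    using pointwise[of K "snd z" "hMV (fst z)" "\<lambda>j. p j z"] K labels z hMV_r p_nn p_sum[OF z] p_mv[OF z]
    unfolding a_def b_def W_p[OF z] dd_def M_def by auto
  have W01: "0 \<le> W z \<and> W z \<le> 1" if "z \<in> space D" for z using pw[OF that] by simp
  have ddm[measurable]: "dd \<in> borel_measurable D" unfolding dd_def by measurable
  have dd01: "0 \<le> dd z \<and> dd z \<le> 1" if z: "z \<in> space D" for z
  proof -
    have "(\<Sum>j\<in>{1..K}. (p j z)^2) \<le> (\<Sum>j\<in>{1..K}. p j z)"
    proof (intro sum_mono)
      fix j assume j: "j \<in> {1..K}"
      show "(p j z)^2 \<le> p j z"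
        using p_le1[OF z j] p_nn[of j z] by (simp add: power2_eq_square mult_left_le)
    qed
    moreover have "0 \<le> (\<Sum>j\<in>{1..K}. (p j z)^2)" by (intro sum_nonneg) auto
    ultimately show ?thesis using p_sum[OF z] unfolding dd_def by auto
  qed
  have iW: "integrable D W"
    by (rule D.integrable_const_bound[where B=1]) (auto intro!: AE_I2 dest: W01)
  have iW2: "integrable D (\<lambda>z. (W z)^2)"
    by (rule D.integrable_const_bound[where B=1]) (auto intro!: AE_I2 simp: abs_le_square_iff power_le_one dest: W01)
  have ia: "integrable D a" unfolding a_def
    by (rule D.integrable_const_bound[where B=1]) (auto intro!: AE_I2 simp: abs_le_square_iff power_le_one dest: W01)
  have ib: "integrable D b" unfolding b_def
    by (rule D.integrable_const_bound[where B=1]) (auto intro!: AE_I2 simp: abs_le_square_iff power_le_one dest: W01)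
  have idd: "integrable D dd"
    by (rule D.integrable_const_bound[where B=1]) (auto intro!: AE_I2 dest: dd01)
  have iM: "integrable D M"
  proof -
    have S: "{z\<in>space D. hMV (fst z) \<noteq> snd z} \<in> sets D" by (rule cnt_set2[OF meas_MV meas_snd])
    have "integrable D (indicator {z\<in>space D. hMV (fst z) \<noteq> snd z} :: _ \<Rightarrow> real)"
      using S by (intro integrable_real_indicator) (auto simp: D.emeasure_eq_measure)
    then show ?thesis
      by (rule iffD1[OF Bochner_Integration.integrable_cong[OF refl], rotated]) (auto simp: M_def indicator_def)
  qed
  have I1: "(\<integral>z. W z \<partial>D) \<le> (\<integral>z. dd z \<partial>D) + (\<integral>z. M z \<partial>D)"
  proof -
    have "(\<integral>z. W z \<partial>D) \<le> (\<integral>z. dd z + M z \<partial>D)"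
      using iW idd iM pw by (intro integral_mono) auto
    then show ?thesis using idd iM by simp
  qed
  have I2: "real K * (\<integral>z. (W z)^2 \<partial>D) \<le> (real K - 1) * (2 * (\<integral>z. W z \<partial>D) - (\<integral>z. dd z \<partial>D))"
  proof -
    have "(\<integral>z. real K * (W z)^2 \<partial>D) \<le> (\<integral>z. (real K - 1) * (2 * W z - dd z) \<partial>D)"
      using iW idd iW2 pw by (intro integral_mono) auto
    then show ?thesis using iW idd iW2 by simp
  qed
  have I3: "(\<integral>z. M z \<partial>D) \<le> 2 * ((\<integral>z. (W z)^2 \<partial>D) - (\<integral>z. b z \<partial>D) + (\<integral>z. a z \<partial>D))"
  proof -
    have "(\<integral>z. M z \<partial>D) \<le> (\<integral>z. 2 * ((W z)^2 - b z + a z) \<partial>D)"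
      using iM iW2 ia ib pw by (intro integral_mono) auto
    then show ?thesis using iW2 ia ib by simp
  qed
  have I4: "(\<integral>z. a z \<partial>D) \<le> (\<integral>z. b z \<partial>D)"
    unfolding a_def b_def
  proof (rule competence_sq[OF D Wm W01])
    fix t :: real assume t: "0 \<le> t" "t \<le> 1/2"
    have e1: "{z\<in>space D. W z \<in> {1/2..1-t}} = {z\<in>space D. W_rho rho clf z \<in> {1/2..1-t}}"
      using W_eq by auto
    have e2: "{z\<in>space D. W z \<in> {t..<1/2}} = {z\<in>space D. W_rho rho clf z \<in> {t..<1/2}}"
      using W_eq by auto
    show "measure D {z\<in>space D. W z \<in> {1/2..1-t}} \<le> measure D {z\<in>space D. W z \<in> {t..<1/2}}"
      unfolding e1 e2 using comp t unfolding competent_def by blast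
  qed
  have e_nn: "0 \<le> (\<integral>z. W z \<partial>D)" by (intro integral_nonneg_AE AE_I2) (auto dest: W01)
  have DER_eq: "DER D rho clf = (\<integral>z. dd z \<partial>D) / (\<integral>z. W z \<partial>D)"
    unfolding DER_def E1 E3 ..
  have EIR_eq: "EIR D rho clf hMV = ((\<integral>z. W z \<partial>D) - (\<integral>z. M z \<partial>D)) / (\<integral>z. W z \<partial>D)"
    unfolding EIR_def E1 E2 ..
  have e_pos: "0 < (\<integral>z. W z \<partial>D)" using e_nn nz E1 by simp
  show ?thesis
    unfolding DER_eq EIR_eq
    using final_alg[OF K e_pos I1 I2 I3 I4] .
qed
end
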